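(* For all real $a$ and $y>0$, $$\frac{\Gamma(a,y)}{\Gamma(a-1,y)}<\frac12\left[y+a+\sqrt{(y-a)^2+4y}\right]$$ and $$\Gamma(a,y)>\frac{2y^a e^{-y}}{y+1-a+\sqrt{(y-a-1)^2+4y}}.$$
   Context: $\Gamma(a,y)=\int_y^{\infty} t^{a-1}e^{-t}\,dt$ is the upper incomplete gamma function, defined for all real $a$ when $y>0$. *)

theory Defs
  imports "HOL-Analysis.Analysis"
begin

definition upper_inc_gamma :: "real \<Rightarrow> real \<Rightarrow> real" where
  "upper_inc_gamma a y = integral {y..} (\<lambda>t. t powr (a - 1) * exp (- t))"

end

theory Submission
  imports Defs
begin


lemma f_absint:
  fixes a y :: real assumes y: "y > 0"
  shows "(\<lambda>t. t powr (a - 1) * exp (- t)) absolutely_integrable_on {y..}"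
proof -
  define b where "b = max a 1"
  have b: "b > 0" "a - b \<le> 0" by (auto simp: b_def)
  have "(\<lambda>t. t powr (b - 1) / exp t) integrable_on {0..}"
    using Gamma_integral_real[OF b(1)] by blast
  hence "(\<lambda>t. t powr (b - 1) / exp t) absolutely_integrable_on {0..}"
    by (rule nonnegative_absolutely_integrable_1) simp
  hence "(\<lambda>t. t powr (b - 1) / exp t) absolutely_integrable_on {y..}"
    by (rule set_integrable_subset) (use y in auto)
  hence gi: "(\<lambda>t. t powr (b - 1) / exp t) integrable_on {y..}"
    using set_lebesgue_integral_eq_integral(1) by blast
  have g: "(\<lambda>t. y powr (a - b) * (t powr (b - 1) / exp t)) integrable_on {y..}"
    using integrable_on_cmult_left[OF gi, of "y powr (a - b)"] by (simp only: of_real_eq_id id_def)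
  have S: "{y..} \<in> sets lebesgue" by simp
  have m: "(\<lambda>t. t powr (a - 1) * exp (- t)) \<in> borel_measurable (lebesgue_on {y..})"
    by (rule continuous_imp_measurable_on_sets_lebesgue[OF _ S])
       (use y in \<open>auto intro!: continuous_intros\<close>)
  show ?thesis
  proof (rule measurable_bounded_by_integrable_imp_absolutely_integrable[OF m S g])
    fix t :: real assume "t \<in> {y..}"
    hence t: "t \<ge> y" by simp
    have "t powr (a - 1) = t powr (a - b) * t powr (b - 1)"
      by (simp add: powr_add[symmetric])
    moreover have "t powr (a - b) \<le> y powr (a - b)"
      using powr_mono2'[OF b(2) y t] .
    ultimately have "t powr (a - 1) \<le> y powr (a - b) * t powr (b - 1)"
      by (simp add: mult_right_mono)
    hence "t powr (a - 1) * exp (- t) \<le> y powr (a - b) * t powr (b - 1) * exp (- t)"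
      by (simp add: mult_right_mono)
    thus "norm (t powr (a - 1) * exp (- t)) \<le> y powr (a - b) * (t powr (b - 1) / exp t)"
      by (simp add: exp_minus field_simps)
  qed
qed

lemma tail:
  fixes h :: "real \<Rightarrow> real"
  assumes "h absolutely_integrable_on {y..}"
  shows "((\<lambda>x. integral {y..x} h) \<longlongrightarrow> integral {y..} h) at_top"
proof -
  have "((\<lambda>x. LINT t:{y..x}|lebesgue. h t) \<longlongrightarrow> (LINT t:{y..}|lebesgue. h t)) at_top"
    by (rule tendsto_set_lebesgue_integral_at_top) (use assms in auto)
  moreover have "(LINT t:{y..}|lebesgue. h t) = integral {y..} h"
    using set_lebesgue_integral_eq_integral(2)[OF assms] .
  moreover have "(LINT t:{y..x}|lebesgue. h t) = integral {y..x} h" for x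
    by (rule set_lebesgue_integral_eq_integral(2), rule set_integrable_subset[OF assms]) auto
  ultimately show ?thesis by simp
qed


lemma E_pos:
  fixes a t S :: real
  assumes t: "t > 0" and S: "S > 0" "S^2 = (t - a - 1)^2 + 4 * t"
  shows "(1 + a) * S + (1 - a) * (t + 1 - a) + 4 * a > 0"
proof -
  define c where "c = t + 1 - a"
  define E where "E = (1 + a) * S + (1 - a) * c + 4 * a"
  define E' where "E' = (1 + a) * S - (1 - a) * c - 4 * a"
  have S2: "S^2 = c^2 + 4*a" using S(2) by (simp add: c_def power2_eq_square algebra_simps)
  have prod: "E * E' = 4 * a * t^2"
  proof -
    have "E * E' = (1+a)^2 * S^2 - ((1 - a) * c + 4 * a)^2"
      by (simp add: E_def E'_def power2_eq_square algebra_simps)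
    also have "\<dots> = 4 * a * t^2" unfolding S2 c_def
      by (simp add: power2_eq_square algebra_simps)
    finally show ?thesis .
  qed
  have "E > 0"
  proof (cases "a > 0")
    case True
    have "E + E' = 2 * (1 + a) * S" by (simp add: E_def E'_def)
    hence sum: "E + E' > 0" using True S by simp
    have "E * E' > 0" using prod True t by simp
    show ?thesis
    proof (rule ccontr)
      assume "\<not> E > 0"
      hence "E' > 0" using sum by linarith
      hence "E * E' \<le> 0" using \<open>\<not> E > 0\<close> by (simp add: mult_nonpos_nonneg)
      thus False using \<open>E * E' > 0\<close> by linarith
    qed
  next
    case False
    have "E - E' = 2 * ((1 - a) * c + 4 * a)" by (simp add: E_def E'_def)
    also have "(1 - a) * c + 4 * a = (1 + a)^2 + (1 - a) * t"
      by (simp add: c_def power2_eq_square algebra_simps)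
    finally have eq: "E - E' = 2 * ((1 + a)^2 + (1 - a) * t)" .
    have "(1 - a) * t > 0" using False t by simp
    moreover have "(1 + a)^2 \<ge> 0" by simp
    ultimately have "(1 + a)^2 + (1 - a) * t > 0" by (intro add_nonneg_pos)
    hence "E - E' > 0" unfolding eq by simp
    show ?thesis
    proof (rule ccontr)
      assume "\<not> E > 0"
      hence "E' < 0" using \<open>E - E' > 0\<close> by linarith
      hence "E * E' \<ge> 0" using \<open>\<not> E > 0\<close> by (simp add: mult_nonpos_nonpos)
      moreover have "4 * a * t^2 \<le> 0" using False by (simp add: mult_nonpos_nonneg)
      ultimately have "E * E' = 0" using prod by linarith
      hence "E = 0" using \<open>E' < 0\<close> by simp
      hence "a = 0"  using prod \<open>E' < 0\<close> t by simp
      hence "S^2 = c^2" "c > 0" using S2 t by (auto simp: c_def)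
      hence "S = c" using S by (metis power2_eq_iff_nonneg less_imp_le)
      hence "E = 2 * c" using \<open>a = 0\<close> by (simp add: E_def)
      thus False using \<open>E = 0\<close> \<open>c > 0\<close> by simp
    qed
  qed
  thus ?thesis by (simp add: E_def c_def)
qed

lemma Q_pos:
  fixes a t S :: real
  assumes t: "t > 0" and S: "S > 0" "S^2 = (t - a - 1)^2 + 4 * t"
  shows "(t + 1 - a + S)^2 + 2 * (a - t) * (t + 1 - a + S) - 2 * t * (1 + (t - a + 1) / S) > 0"
proof -
  let ?Q = "(t + 1 - a + S)^2 + 2 * (a - t) * (t + 1 - a + S) - 2 * t * (1 + (t - a + 1) / S)"
  have "?Q * S = 2 * ((1 + a) * S + (1 - a) * (t + 1 - a) + 4 * a)"
  proof -
    have "?Q * S = S * (t + 1 - a + S)^2 + 2 * (a - t) * (t + 1 - a + S) * S - 2 * t * (S + (t - a + 1))"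
      using S by (simp add: field_simps)
    also have "\<dots> = 2 * ((1 + a) * S + (1 - a) * (t + 1 - a) + 4 * a)"
    proof -
      have "S * (t + 1 - a + S)^2 = S * (t+1-a)^2 + 2*(t+1-a)*S^2 + S * S^2"
        by (simp add: power2_eq_square algebra_simps)
      moreover have "2 * (a - t) * (t + 1 - a + S) * S = 2*(a-t)*(t+1-a)*S + 2*(a-t)*S^2"
        by (simp add: power2_eq_square algebra_simps)
      show ?thesis using S(2) by algebra
    qed
    finally show ?thesis .
  qed
  moreover have "(1 + a) * S + (1 - a) * (t + 1 - a) + 4 * a > 0" by (rule E_pos[OF t S])
  ultimately have "?Q * S > 0" by simp
  thus ?thesis using S by (simp add: zero_less_mult_iff)
qed


lemma sqrt_deriv:
  fixes a t :: real assumes t: "t > 0"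
  shows "((\<lambda>t. sqrt ((t - a - 1)^2 + 4 * t)) has_real_derivative (t - a + 1) / sqrt ((t - a - 1)^2 + 4 * t)) (at t)"
proof -
  have pos: "(t - a - 1)^2 + 4 * t > 0" using t by (smt (verit) zero_le_power2)
  have g: "((\<lambda>t. (t - a - 1)^2 + 4 * t) has_real_derivative (2 * (t - a - 1) + 4)) (at t)"
    by (auto intro!: derivative_eq_intros)
  have "((\<lambda>t. sqrt ((t - a - 1)^2 + 4 * t)) has_real_derivative
      inverse (sqrt ((t - a - 1)^2 + 4 * t)) / 2 * (2 * (t - a - 1) + 4)) (at t)"
    by (rule DERIV_chain2[OF DERIV_real_sqrt[OF pos] g])
  moreover have "inverse (sqrt ((t - a - 1)^2 + 4 * t)) / 2 * (2 * (t - a - 1) + 4)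
      = (t - a + 1) / sqrt ((t - a - 1)^2 + 4 * t)"
  proof -
    have "inverse q / 2 * (2 * (t - a - 1) + 4) = (t - a + 1) / q" if "q > 0" for q :: real
      using that by (simp add: field_simps)
    moreover have "sqrt ((t - a - 1)^2 + 4 * t) > 0" using pos by simp
    ultimately show ?thesis by blast
  qed
  ultimately show ?thesis by metis
qed

lemma second_ineq:
  fixes a y :: real assumes y: "y > 0"
  shows "upper_inc_gamma a y > 2 * y powr a * exp (- y) / (y + 1 - a + sqrt ((y - a - 1)\<^sup>2 + 4 * y))"
proof -
  define S where "S t = sqrt ((t - a - 1)^2 + 4 * t)" for t
  define P where "P t = t + 1 - a + S t" for t
  define F where "F t = 2 * t powr a * exp (- t) / P t" for t
  define Nd where "Nd t = 2 * (a * t powr (a - 1) * exp (- t) - t powr a * exp (- t))" for t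
  define Pd where "Pd t = 1 + (t - a + 1) / S t" for t
  define Fd where "Fd t = (Nd t * P t - 2 * t powr a * exp (- t) * Pd t) / (P t * P t)" for t
  define f where "f t = t powr (a - 1) * exp (- t)" for t
  define H where "H t = f t + Fd t" for t
  have Spos: "S t > 0" and S2: "(S t)^2 = (t - a - 1)^2 + 4 * t" if "t > 0" for t
  proof -
    have pos: "(t - a - 1)^2 + 4 * t > 0" using that by (smt (verit) zero_le_power2)
    thus "S t > 0" "(S t)^2 = (t - a - 1)^2 + 4 * t" by (auto simp: S_def)
  qed
  have Sge: "S t \<ge> \<bar>t - a - 1\<bar>" if "t > 0" for t
  proof -
    have "sqrt ((t - a - 1)^2) \<le> S t" unfolding S_def
      by (rule real_sqrt_le_mono) (use that in simp)
    thus ?thesis by simp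
  qed
  have Ppos: "P t > 0" if "t > 0" for t
    using Sge[OF that] that unfolding P_def by (smt (verit))
  have Pge: "P t \<ge> 2 * (t - a)" if "t > 0" for t
    using Sge[OF that] that unfolding P_def by (smt (verit))
  have Sd: "(S has_real_derivative (t - a + 1) / S t) (at t)" if "t > 0" for t
    unfolding S_def[abs_def] using sqrt_deriv[OF that] by (simp add: S_def)
  have Pder: "(P has_real_derivative Pd t) (at t)" if "t > 0" for t
    unfolding P_def[abs_def] Pd_def
    by (rule derivative_eq_intros Sd[OF that] refl | simp)+
  have Nder: "((\<lambda>t. 2 * t powr a * exp (- t)) has_real_derivative Nd t) (at t)" if "t > 0" for t
    unfolding Nd_def using that
    by (auto intro!: derivative_eq_intros simp: field_simps)
  have Fder: "(F has_real_derivative Fd t) (at t)" if "t > 0" for t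
  proof -
    have "((\<lambda>t. 2 * t powr a * exp (- t) / P t) has_real_derivative
      (Nd t * P t - 2 * t powr a * exp (- t) * Pd t) / (P t * P t)) (at t)"
      by (rule DERIV_divide[OF Nder[OF that] Pder[OF that]]) (use Ppos[OF that] in simp)
    thus ?thesis unfolding F_def[abs_def] Fd_def .
  qed
  have Hpos: "H t > 0" if t: "t > 0" for t
  proof -
    define u where "u = t powr (a - 1) * exp (- t)"
    have u: "u > 0" using t by (simp add: u_def)
    have ta: "t powr a = t * t powr (a - 1)" using t by (simp add: powr_mult_base)
    have Q: "(P t)^2 + 2 * (a - t) * P t - 2 * t * Pd t > 0"
      using Q_pos[OF t Spos[OF t] S2[OF t]] by (simp add: P_def Pd_def)
    have "H t = u * ((P t)^2 + 2 * (a - t) * P t - 2 * t * Pd t) / (P t)^2"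
      using Ppos[OF t] unfolding H_def f_def Fd_def Nd_def u_def ta
      by (simp add: field_simps power2_eq_square)
    thus ?thesis using u Q Ppos[OF t] by simp
  qed
  have Scont: "isCont S t" if "t > 0" for t using DERIV_isCont[OF Sd[OF that]] .
  have Pcont: "isCont P t" if "t > 0" for t using DERIV_isCont[OF Pder[OF that]] .
  have Hcont_at: "isCont H t" if t: "t > 0" for t
  proof -
    have "isCont (\<lambda>t. t powr (a - 1) * exp (- t) + (2 * (a * t powr (a - 1) * exp (- t) - t powr a * exp (- t)) * P t
       - 2 * t powr a * exp (- t) * (1 + (t - a + 1) / S t)) / (P t * P t)) t"
      using Spos[OF t] Ppos[OF t] t
      by (intro continuous_intros Scont[OF t] Pcont[OF t]) auto
    thus ?thesis unfolding H_def[abs_def] f_def Fd_def Nd_def Pd_def .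
  qed
  have Hcont: "continuous_on {y..} H"
    by (rule continuous_at_imp_continuous_on) (use Hcont_at y in auto)
  have fcont: "continuous_on {y..} f" unfolding f_def[abs_def] using y
    by (auto intro!: continuous_intros)
  have fint: "f integrable_on {y..}"
    using set_lebesgue_integral_eq_integral(1)[OF f_absint[OF y, of a]] unfolding f_def[abs_def] .
  have fin: "integral {y..x} f = integral {y..x} H - (F x - F y)" if x: "x \<ge> y" for x
  proof -
    have "(Fd has_integral F x - F y) {y..x}"
    proof (rule fundamental_theorem_of_calculus[OF x])
      fix t assume "t \<in> {y..x}"
      hence "t > 0" using y by simp
      thus "(F has_vector_derivative Fd t) (at t within {y..x})"
        using Fder has_real_derivative_iff_has_vector_derivative has_field_derivative_at_within by blast
    qed
    moreover have "H integrable_on {y..x}"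
      by (rule integrable_continuous_interval, rule continuous_on_subset[OF Hcont]) auto
    ultimately have "((\<lambda>t. H t - Fd t) has_integral integral {y..x} H - (F x - F y)) {y..x}"
      by (intro has_integral_diff) auto
    moreover have "(\<lambda>t. H t - Fd t) = f" by (auto simp: H_def)
    ultimately show ?thesis by (simp add: integral_unique)
  qed
  obtain t0 where t0: "t0 \<in> {y..y+1}" "\<forall>t\<in>{y..y+1}. H t0 \<le> H t"
    using continuous_attains_inf[of "{y..y+1}" H] continuous_on_subset[OF Hcont] by force
  define m where "m = H t0"
  have m: "m > 0" using Hpos t0(1) y by (simp add: m_def)
  have intm: "integral {y..y+1} H \<ge> m"
  proof -
    have "integral {y..y+1} (\<lambda>t. m) \<le> integral {y..y+1} H"
      by (rule integral_le)
         (use t0 in \<open>auto simp: m_def intro!: integrable_continuous_interval continuous_on_subset[OF Hcont]\<close>)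
    thus ?thesis by simp
  qed
  have "((\<lambda>x. x powr a * exp (- x)) \<longlongrightarrow> 0) at_top" by real_asymp
  hence "eventually (\<lambda>x. x powr a * exp (- x) < m) at_top"
    using m by (rule order_tendstoD)
  then obtain x0 where x0: "\<And>x. x \<ge> x0 \<Longrightarrow> x powr a * exp (- x) < m"
    by (auto simp: eventually_at_top_linorder)
  define x where "x = max x0 (max (y + 1) (a + 1))"
  have x: "x \<ge> x0" "x \<ge> y + 1" "x \<ge> a + 1" by (auto simp: x_def)
  have xpos: "x > 0" using x y by simp
  have Fx: "F x < m"
  proof -
    have "P x \<ge> 2" using Pge[OF xpos] x by simp
    moreover have N: "x powr a * exp (- x) \<ge> 0" by simp
    ultimately have "2 * (x powr a * exp (- x)) \<le> (x powr a * exp (- x)) * P x"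
      using mult_left_mono[OF \<open>P x \<ge> 2\<close> N] by (simp add: mult.commute)
    hence "F x \<le> x powr a * exp (- x)"
      using Ppos[OF xpos] by (simp add: F_def divide_le_eq)
    thus ?thesis using x0[OF x(1)] by simp
  qed
  have G: "upper_inc_gamma a y = integral {y..} f" by (simp add: upper_inc_gamma_def f_def[abs_def])
  have fx_int: "f integrable_on {y..x}"
    by (rule integrable_continuous_interval, rule continuous_on_subset[OF fcont]) (use x in auto)
  have f_nonneg: "\<forall>t\<in>{y..}. 0 \<le> f t" by (simp add: f_def)
  have I1: "integral {y..x} f \<le> integral {y..} f"
    by (rule integral_subset_le[OF _ fx_int fint f_nonneg]) auto
  have H1: "H integrable_on {y..y+1}"
    by (rule integrable_continuous_interval, rule continuous_on_subset[OF Hcont]) auto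
  have H2: "H integrable_on {y..x}"
    by (rule integrable_continuous_interval, rule continuous_on_subset[OF Hcont]) auto
  have H_nonneg: "\<forall>t\<in>{y..x}. 0 \<le> H t"
  proof
    fix t assume "t \<in> {y..x}"
    hence "t > 0" using y by simp
    thus "0 \<le> H t" using Hpos[of t] by simp
  qed
  have I2: "integral {y..y+1} H \<le> integral {y..x} H"
    by (rule integral_subset_le[OF _ H1 H2 H_nonneg]) (use x in auto)
  have "upper_inc_gamma a y \<ge> m - F x + F y"
    using G I1 I2 fin[of x] x intm by linarith
  hence "upper_inc_gamma a y > F y" using Fx by linarith
  thus ?thesis by (simp add: F_def P_def S_def)
qed


lemma recur:
  fixes a y :: real assumes y: "y > 0"
  shows "upper_inc_gamma a y = (a - 1) * upper_inc_gamma (a - 1) y + y powr (a - 1) * exp (- y)"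
proof -
  define f1 where "f1 t = t powr (a - 1) * exp (- t)" for t :: real
  define f2 where "f2 t = t powr (a - 1 - 1) * exp (- t)" for t :: real
  define G where "G t = - (t powr (a - 1) * exp (- t))" for t :: real
  have Gd: "(G has_real_derivative (f1 t - (a - 1) * f2 t)) (at t)" if "t > 0" for t
    unfolding G_def[abs_def] f1_def f2_def using that
    by (auto intro!: derivative_eq_intros simp: field_simps)
  have c1: "continuous_on {y..x} f1" for x unfolding f1_def[abs_def] using y
    by (auto intro!: continuous_intros)
  have c2: "continuous_on {y..x} f2" for x unfolding f2_def[abs_def] using y
    by (auto intro!: continuous_intros)
  have fin: "integral {y..x} f1 = (a - 1) * integral {y..x} f2 + (G x - G y)" if x: "x \<ge> y" for x
  proof -
    have "((\<lambda>t. f1 t - (a - 1) * f2 t) has_integral G x - G y) {y..x}"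
    proof (rule fundamental_theorem_of_calculus[OF x])
      fix t assume "t \<in> {y..x}"
      hence "t > 0" using y by simp
      thus "(G has_vector_derivative (f1 t - (a - 1) * f2 t)) (at t within {y..x})"
        using Gd has_real_derivative_iff_has_vector_derivative has_field_derivative_at_within by blast
    qed
    moreover have i1: "f1 integrable_on {y..x}" by (rule integrable_continuous_interval[OF c1])
    moreover have i2: "f2 integrable_on {y..x}" by (rule integrable_continuous_interval[OF c2])
    ultimately have "integral {y..x} (\<lambda>t. f1 t - (a - 1) * f2 t) = G x - G y"
      by (simp add: integral_unique)
    moreover have "integral {y..x} (\<lambda>t. f1 t - (a - 1) * f2 t) = integral {y..x} f1 - (a - 1) * integral {y..x} f2"
    proof -
      have i3: "(\<lambda>t. (a - 1) * f2 t) integrable_on {y..x}"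
        using integrable_on_cmult_left[OF i2, of "a - 1"] by (simp only: of_real_eq_id id_def)
      show ?thesis using integral_diff[OF i1 i3] by simp
    qed
    ultimately show ?thesis by simp
  qed
  have L1: "((\<lambda>x. integral {y..x} f1) \<longlongrightarrow> upper_inc_gamma a y) at_top"
    using tail[OF f_absint[OF y, of a]] by (simp add: upper_inc_gamma_def f1_def[abs_def])
  have L2: "((\<lambda>x. integral {y..x} f2) \<longlongrightarrow> upper_inc_gamma (a - 1) y) at_top"
    using tail[OF f_absint[OF y, of "a - 1"]] by (simp add: upper_inc_gamma_def f2_def[abs_def])
  have LG: "(G \<longlongrightarrow> 0) at_top" unfolding G_def[abs_def] by real_asymp
  have "((\<lambda>x. (a - 1) * integral {y..x} f2 + (G x - G y)) \<longlongrightarrow>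
        (a - 1) * upper_inc_gamma (a - 1) y + (0 - G y)) at_top"
    by (intro tendsto_intros L2 LG)
  moreover have "eventually (\<lambda>x. (a - 1) * integral {y..x} f2 + (G x - G y) = integral {y..x} f1) at_top"
    using eventually_ge_at_top[of y] by eventually_elim (simp add: fin)
  ultimately have "((\<lambda>x. integral {y..x} f1) \<longlongrightarrow> (a - 1) * upper_inc_gamma (a - 1) y + (0 - G y)) at_top"
    by (rule Lim_transform_eventually)
  with L1 have "upper_inc_gamma a y = (a - 1) * upper_inc_gamma (a - 1) y + (0 - G y)"
    by (rule tendsto_unique[OF trivial_limit_at_top_linorder])
  thus ?thesis by (simp add: G_def)
qed

theorem corollary8:
  fixes a y :: real
  assumes "y > 0"
  shows "upper_inc_gamma a y / upper_inc_gamma (a - 1) y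
           < (y + a + sqrt ((y - a)\<^sup>2 + 4 * y)) / 2
         \<and> upper_inc_gamma a y
           > 2 * y powr a * exp (- y) / (y + 1 - a + sqrt ((y - a - 1)\<^sup>2 + 4 * y))"
proof
  show "upper_inc_gamma a y
           > 2 * y powr a * exp (- y) / (y + 1 - a + sqrt ((y - a - 1)\<^sup>2 + 4 * y))"
    by (rule second_ineq[OF assms])
  define R where "R = sqrt ((y - a)\<^sup>2 + 4 * y)"
  define g where "g = upper_inc_gamma (a - 1) y"
  define e where "e = y powr (a - 1) * exp (- y)"
  have e: "e > 0" using assms by (simp add: e_def)
  have "g > 2 * y powr (a - 1) * exp (- y) / (y + 1 - (a - 1) + sqrt ((y - (a - 1) - 1)\<^sup>2 + 4 * y))"
    unfolding g_def by (rule second_ineq[OF assms])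
  also have "y - (a - 1) - 1 = y - a" by simp
  finally have g1: "g > 2 * e / (y + 2 - a + R)" by (simp add: e_def R_def algebra_simps)
  have Rge: "R \<ge> \<bar>y - a\<bar>" unfolding R_def
    using real_sqrt_le_mono[of "(y - a)^2" "(y - a)^2 + 4 * y"] assms by simp
  have D: "y + 2 - a + R > 0" using Rge assms by linarith
  have "2 * e / (y + 2 - a + R) > 0" using e D by simp
  hence gpos: "g > 0" using g1 by linarith
  have "2 * e < g * (y + 2 - a + R)" using g1 D by (simp add: divide_less_eq)
  hence "e / g < (y + 2 - a + R) / 2" using gpos by (simp add: divide_less_eq field_simps)
  moreover have "upper_inc_gamma a y / g = (a - 1) + e / g"
    using recur[OF assms, of a] gpos by (simp add: g_def e_def field_simps)
  ultimately have "upper_inc_gamma a y / g < (a - 1) + (y + 2 - a + R) / 2" by simp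
  also have "\<dots> = (y + a + R) / 2" by (simp add: field_simps)
  finally show "upper_inc_gamma a y / upper_inc_gamma (a - 1) y < (y + a + sqrt ((y - a)\<^sup>2 + 4 * y)) / 2"
    by (simp add: g_def R_def)
qed

end
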